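(* Let $n\ge2$, $0<r<n$, and $E_1\ge E_2\ge\dots\ge E_n>0$. For a set $\mathcal{A}=\{a_1<a_2<\dots<a_r\}\subseteq[1:n]$ of size $r$, let (P-$\mathcal{A}$) be the linear program $$\max_{\mathbf{p}\in\mathcal{I},\,\gamma\in\mathbb{R}}\ \sum_{j=1}^np_jE_j-\frac12\sum_{j\in\mathcal{A}}p_jE_j\quad\text{s.t. } p_aE_a\ge\gamma\ \forall a\in\mathcal{A},\quad \gamma\ge p_tE_t\ \forall t\in[1:n]\setminus\mathcal{A}.$$ Then the optimal value of (P-$\{1,2,\dots,r\}$) is at least the optimal value of (P-$\mathcal{A}$) for every such $\mathcal{A}$.
   Context: $\mathcal{I}=\{\mathbf{p}\in[0,1]^n:\sum_kp_k=r\}$; $[1:n]=\{1,\dots,n\}$. (For $m=2$, maximizing $f^{\mathrm{worst}}(\mathbf{p})=\sum_kp_kE_k-\frac12(\text{sum of the }r\text{ largest }p_kE_k)$ over $\mathcal{I}$ is the best of the programs (P-$\mathcal{A}$).) *)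

theory Defs
  imports "HOL-Analysis.Analysis"
begin

text \<open>Vectors p in [0,1]^n are functions nat => real, indexed on {1..n}.\<close>

definition simplexI :: "nat \<Rightarrow> nat \<Rightarrow> (nat \<Rightarrow> real) set" where
  "simplexI n r = {p. (\<forall>k\<in>{1..n}. 0 \<le> p k \<and> p k \<le> 1) \<and> (\<Sum>k=1..n. p k) = real r}"

definition feasibleA :: "nat \<Rightarrow> nat \<Rightarrow> (nat \<Rightarrow> real) \<Rightarrow> nat set \<Rightarrow> ((nat \<Rightarrow> real) \<times> real) set" where
  "feasibleA n r E A = {(p, \<gamma>). p \<in> simplexI n r \<and>
      (\<forall>a\<in>A. p a * E a \<ge> \<gamma>) \<and> (\<forall>t\<in>{1..n} - A. \<gamma> \<ge> p t * E t)}"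

definition objA :: "nat \<Rightarrow> (nat \<Rightarrow> real) \<Rightarrow> nat set \<Rightarrow> (nat \<Rightarrow> real) \<Rightarrow> real" where
  "objA n E A p = (\<Sum>j=1..n. p j * E j) - (1/2) * (\<Sum>j\<in>A. p j * E j)"

definition optA :: "nat \<Rightarrow> nat \<Rightarrow> (nat \<Rightarrow> real) \<Rightarrow> nat set \<Rightarrow> real" where
  "optA n r E A = (SUP x\<in>feasibleA n r E A. objA n E A (fst x))"

end

theory Submission imports Defs begin
lemma pair_case1:
  fixes Ei Ea x y g :: real
  assumes "Ea > 0" "Ei \<ge> 2*Ea" "0\<le>x" "x\<le>1" "0\<le>y" "y\<le>1" "x*Ei \<le> g" "g \<le> y*Ea"
  shows "\<exists>x' y'. x'+y' = x+y \<and> 0\<le>x' \<and> x'\<le>1 \<and> 0\<le>y' \<and> y'\<le>1 \<and> x'*Ei \<ge> g \<and> g \<ge> y'*Ea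
     \<and> x'*Ei/2 + y'*Ea \<ge> y*Ea/2 + x*Ei"
proof -
  define x' where "x' = min 1 (x+y)"
  have xy: "y \<le> x'" "x' \<le> 1" "x+y-x' \<le> x" "0 \<le> x+y-x'" using assms unfolding x'_def by auto
  have "x*(2*Ea) \<le> x*Ei" using assms by (intro mult_left_mono) auto
  hence "x*(2*Ea) \<le> y*Ea" using assms by linarith
  hence "(2*x)*Ea \<le> y*Ea" by (simp add: algebra_simps)
  hence x2: "2*x \<le> y" using assms by (simp add: mult_le_cancel_right_pos)
  have "y*Ea \<le> y*Ei" using assms by (intro mult_left_mono) auto
  moreover have "y*Ei \<le> x'*Ei" using xy assms by (intro mult_right_mono) auto
  ultimately have a: "x'*Ei \<ge> g" using assms by linarith
  have "(x+y-x')*Ea \<le> x*Ea" using xy assms by (intro mult_right_mono) auto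
  moreover have "x*Ea \<le> x*Ei" using assms by (intro mult_left_mono) auto
  ultimately have b: "(x+y-x')*Ea \<le> g" using assms by linarith
  have "(x'-y)*(Ei/2 - Ea) \<ge> 0" using xy assms by simp
  moreover have "(Ei-Ea)*(y/2-x) \<ge> 0" using x2 assms by simp
  moreover have "x'*Ei/2 + (x+y-x')*Ea - (y*Ea/2 + x*Ei) = (x'-y)*(Ei/2-Ea) + (Ei-Ea)*(y/2-x)"
    by (simp add: field_simps)
  ultimately have c: "x'*Ei/2 + (x+y-x')*Ea \<ge> y*Ea/2 + x*Ei" by linarith
  show ?thesis apply (rule exI[of _ x'], rule exI[of _ "x+y-x'"]) using a b c xy assms unfolding x'_def by auto
qed

lemma pair_case2:
  fixes Ei Ea x y g :: real
  assumes "Ea > 0" "Ei \<ge> Ea" "Ei \<le> 2*Ea" "0\<le>x" "x\<le>1" "0\<le>y" "y\<le>1" "x*Ei \<le> g" "g \<le> y*Ea"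
  shows "\<exists>x' y'. x'+y' = x+y \<and> 0\<le>x' \<and> x'\<le>1 \<and> 0\<le>y' \<and> y'\<le>1 \<and> x'*Ei \<ge> g \<and> g \<ge> y'*Ea
     \<and> x'*Ei/2 + y'*Ea \<ge> y*Ea/2 + x*Ei"
proof -
  define u where "u = g/Ei"
  define w where "w = g/Ea"
  define s where "s = x+y"
  define x' where "x' = max u (max (s-w) (s-1))"
  have Ei: "Ei > 0" using assms by linarith
  have g0: "g \<ge> 0" using assms by (smt (verit) mult_nonneg_nonneg)
  have gu: "g = u*Ei" using Ei unfolding u_def by simp
  have gw: "g = w*Ea" using assms unfolding w_def by simp
  have u0: "u \<ge> 0" using g0 Ei unfolding u_def by simp
  have wy: "w \<le> y" using assms unfolding w_def by (simp add: divide_le_eq)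
  have xu: "x \<le> u" using assms Ei unfolding u_def by (simp add: le_divide_eq)
  have uw: "u \<le> w" unfolding u_def w_def using g0 assms by (intro divide_left_mono) auto
  have x'1: "x' \<le> 1" "x' \<le> s" "x' \<ge> 0" "x' \<ge> u" "x' \<ge> s - w" "x' \<ge> s - 1"
    using uw wy xu u0 assms unfolding x'_def s_def by auto
  have a: "x'*Ei \<ge> g" using x'1 Ei gu by (simp add: mult_right_mono)
  have "(s-x')*Ea \<le> w*Ea" using x'1 assms by (intro mult_right_mono) auto
  hence b: "(s-x')*Ea \<le> g" using gw by simp
  have V: "x'*Ei/2 + (s-x')*Ea \<ge> y*Ea/2 + x*Ei"
  proof -
    have "x' = u \<or> x' = s-w \<or> x' = s-1" unfolding x'_def by linarith
    moreover
    { assume h: "x' = u"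
      have "(u-x)*(Ei-Ea) \<ge> 0" using xu assms by simp
      moreover have "u*Ei/2 + (s-u)*Ea - (y*Ea/2 + x*Ei) = (u-x)*(Ei-Ea) + y*Ea/2 - g/2"
        using gu unfolding s_def by (simp add: field_simps)
      ultimately have ?thesis unfolding h using assms by linarith }
    moreover
    { assume h: "x' = s-w"
      have "(y-w)*(Ei-Ea) \<ge> 0" using wy assms by simp
      moreover have "(s-w)*Ei/2 + (s-(s-w))*Ea - (y*Ea/2 + x*Ei) = ((y-w)*(Ei-Ea))/2 + w*Ea/2 - x*Ei/2"
        unfolding s_def by (simp add: field_simps)
      ultimately have ?thesis unfolding h using assms gw by linarith }
    moreover
    { assume h: "x' = s-1"
      have "(2*Ea-Ei)*(1-y) \<ge> 0" using assms by simp
      moreover have "(s-1)*Ei/2 + (s-(s-1))*Ea - (y*Ea/2 + x*Ei) = ((2*Ea-Ei)*(1-y))/2 + y*Ea/2 - x*Ei/2"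
        unfolding s_def by (simp add: field_simps)
      ultimately have ?thesis unfolding h using assms by linarith }
    ultimately show ?thesis by blast
  qed
  show ?thesis apply (rule exI[of _ x'], rule exI[of _ "s-x'"]) using a b V x'1 unfolding s_def by auto
qed

lemma pair:
  fixes Ei Ea x y g :: real
  assumes "Ea > 0" "Ei \<ge> Ea" "0\<le>x" "x\<le>1" "0\<le>y" "y\<le>1" "x*Ei \<le> g" "g \<le> y*Ea"
  shows "\<exists>x' y'. x'+y' = x+y \<and> 0\<le>x' \<and> x'\<le>1 \<and> 0\<le>y' \<and> y'\<le>1 \<and> x'*Ei \<ge> g \<and> g \<ge> y'*Ea
     \<and> x'*Ei/2 + y'*Ea \<ge> y*Ea/2 + x*Ei"
proof (cases "Ei \<ge> 2*Ea")
  case True then show ?thesis using pair_case1 assms by blast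
next
  case False then show ?thesis using pair_case2[OF assms(1,2)] assms by auto
qed
lemma improve:
  fixes n r :: nat and E :: "nat \<Rightarrow> real" and A :: "nat set"
  assumes "r < n"
    and mon: "\<And>i j. 1 \<le> i \<Longrightarrow> i \<le> j \<Longrightarrow> j \<le> n \<Longrightarrow> E i \<ge> E j"
    and En: "E n > 0"
    and AS: "A \<subseteq> {1..n}" and cA: "card A = r"
    and feas: "(p, g) \<in> feasibleA n r E A"
  shows "\<exists>q. (q, g) \<in> feasibleA n r E {1..r} \<and> objA n E A p \<le> objA n E {1..r} q"
proof -
  define B where "B = {1..r}"
  have BS: "B \<subseteq> {1..n}" using assms unfolding B_def by auto
  have fA: "finite A" using AS finite_subset by blast
  have cB: "card B = r" unfolding B_def by simp
  have "card (B - A) = card (A - B)"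
    using card_Diff_subset_Int[of B A] card_Diff_subset_Int[of A B] fA cA cB
    by (simp add: B_def Int_commute)
  then obtain \<sigma> where bij: "bij_betw \<sigma> (B - A) (A - B)"
    using finite_same_card_bij[of "B - A" "A - B"] fA unfolding B_def by auto
  have Epos: "\<And>k. k \<in> {1..n} \<Longrightarrow> E k > 0" using mon En by (meson atLeastAtMost_iff less_le_trans order.refl)
  have pb: "\<And>k. k \<in> {1..n} \<Longrightarrow> 0 \<le> p k \<and> p k \<le> 1" and psum: "(\<Sum>k=1..n. p k) = real r"
    and pA: "\<And>a. a \<in> A \<Longrightarrow> p a * E a \<ge> g" and pN: "\<And>t. t \<in> {1..n} - A \<Longrightarrow> g \<ge> p t * E t"
    using feas unfolding feasibleA_def simplexI_def by auto
  have sig: "\<sigma> i \<in> A - B" if "i \<in> B - A" for i using bij that by (auto simp: bij_betw_def)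
  define Q where "Q = (\<lambda>i x' y'. x'+y' = p i + p (\<sigma> i) \<and> 0\<le>x' \<and> x'\<le>1 \<and> 0\<le>y' \<and> y'\<le>1
       \<and> x'*E i \<ge> g \<and> g \<ge> y'*E (\<sigma> i)
       \<and> x'*E i/2 + y'*E (\<sigma> i) \<ge> p (\<sigma> i)*E (\<sigma> i)/2 + p i*E i)"
  have "\<forall>i\<in>B-A. \<exists>z. Q i (fst z) (snd z)"
  proof
    fix i assume i: "i \<in> B - A"
    have si: "\<sigma> i \<in> A - B" using sig i .
    have i1: "i \<in> {1..n}" "i \<le> r" using i BS unfolding B_def by auto
    have s1: "\<sigma> i \<in> {1..n}" "\<sigma> i > r" using si AS unfolding B_def by auto
    have "E (\<sigma> i) \<le> E i" using mon i1 s1 by auto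
    moreover have "E (\<sigma> i) > 0" using Epos s1 by auto
    ultimately have "\<exists>x' y'. Q i x' y'"
      unfolding Q_def using pair[of "E (\<sigma> i)" "E i" "p i" "p (\<sigma> i)" g]
        pb[of i] pb[of "\<sigma> i"] i1 s1 pA[of "\<sigma> i"] pN[of i] si i by auto
    then show "\<exists>z. Q i (fst z) (snd z)" by auto
  qed
  then obtain z where z: "\<And>i. i \<in> B - A \<Longrightarrow> Q i (fst (z i)) (snd (z i))" by metis
  define \<tau> where "\<tau> = inv_into (B - A) \<sigma>"
  have tau1: "\<tau> j \<in> B - A" "\<sigma> (\<tau> j) = j" if "j \<in> A - B" for j
  proof -
    show "\<tau> j \<in> B - A" unfolding \<tau>_def using bij_betwE[OF bij_betw_inv_into[OF bij]] that by blast
    show "\<sigma> (\<tau> j) = j" unfolding \<tau>_def using bij_betw_inv_into_right[OF bij that] .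
  qed
  have tau2: "\<tau> (\<sigma> i) = i" if "i \<in> B - A" for i
    using bij that unfolding \<tau>_def by (simp add: bij_betw_inv_into_left)
  define q where "q = (\<lambda>j. if j \<in> B - A then fst (z j) else if j \<in> A - B then snd (z (\<tau> j)) else p j)"
  have qi: "q i = fst (z i)" if "i \<in> B - A" for i using that unfolding q_def by auto
  have qs: "q (\<sigma> i) = snd (z i)" if "i \<in> B - A" for i using that sig[OF that] tau2[OF that] unfolding q_def by auto
  have qo: "q j = p j" if "j \<notin> B - A" "j \<notin> A - B" for j using that unfolding q_def by auto
  define R where "R = {1..n} - ((B - A) \<union> (A - B))"
  have split: "(\<Sum>k=1..n. f k) = (\<Sum>k\<in>R. f k) + (\<Sum>i\<in>B-A. f i + f (\<sigma> i))" for f :: "nat \<Rightarrow> real"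
  proof -
    have D: "(B - A) \<union> (A - B) \<subseteq> {1..n}" using AS BS by auto
    have "(\<Sum>k=1..n. f k) = (\<Sum>k\<in>R. f k) + (\<Sum>k\<in>(B - A) \<union> (A - B). f k)"
      unfolding R_def using sum.subset_diff[OF D] by simp
    also have "(\<Sum>k\<in>(B - A) \<union> (A - B). f k) = (\<Sum>k\<in>B - A. f k) + (\<Sum>k\<in>A - B. f k)"
      using fA by (intro sum.union_disjoint) (auto simp: B_def)
    also have "(\<Sum>k\<in>A - B. f k) = (\<Sum>i\<in>B - A. f (\<sigma> i))"
      using sum.reindex_bij_betw[OF bij, of f] by simp
    finally show ?thesis by (simp add: sum.distrib)
  qed
  have splitB: "(\<Sum>k\<in>B. f k) = (\<Sum>k\<in>A \<inter> B. f k) + (\<Sum>i\<in>B-A. f i)" for f :: "nat \<Rightarrow> real"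
  proof -
    have "B = (A \<inter> B) \<union> (B - A)" by auto
    hence "(\<Sum>k\<in>B. f k) = (\<Sum>k\<in>(A \<inter> B) \<union> (B - A). f k)" by simp
    also have "\<dots> = (\<Sum>k\<in>A \<inter> B. f k) + (\<Sum>i\<in>B-A. f i)"
      by (intro sum.union_disjoint) (auto simp: B_def)
    finally show ?thesis .
  qed
  have splitA: "(\<Sum>k\<in>A. f k) = (\<Sum>k\<in>A \<inter> B. f k) + (\<Sum>i\<in>B-A. f (\<sigma> i))" for f :: "nat \<Rightarrow> real"
  proof -
    have "A = (A \<inter> B) \<union> (A - B)" by auto
    hence "(\<Sum>k\<in>A. f k) = (\<Sum>k\<in>(A \<inter> B) \<union> (A - B). f k)" by simp
    also have "\<dots> = (\<Sum>k\<in>A \<inter> B. f k) + (\<Sum>k\<in>A-B. f k)"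
      using fA by (intro sum.union_disjoint) auto
    also have "(\<Sum>k\<in>A - B. f k) = (\<Sum>i\<in>B - A. f (\<sigma> i))"
      using sum.reindex_bij_betw[OF bij, of f] by simp
    finally show ?thesis .
  qed
  have Rq: "q k = p k" if "k \<in> R" for k using that qo unfolding R_def by auto
  have ABq: "q k = p k" if "k \<in> A \<inter> B" for k using that qo by auto
  have qb: "0 \<le> q k \<and> q k \<le> 1" if "k \<in> {1..n}" for k
  proof (cases "k \<in> B - A")
    case True then show ?thesis using z[OF True] qi[OF True] unfolding Q_def by auto
  next
    case F: False
    show ?thesis
    proof (cases "k \<in> A - B")
      case True
      have "q k = snd (z (\<tau> k))" using qs[OF tau1(1)[OF True]] tau1(2)[OF True] by simp
      then show ?thesis using z[OF tau1(1)[OF True]] unfolding Q_def by auto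
    next
      case False then show ?thesis using qo F pb that by auto
    qed
  qed
  have qsum: "(\<Sum>k=1..n. q k) = real r"
  proof -
    have "(\<Sum>k=1..n. q k) = (\<Sum>k\<in>R. q k) + (\<Sum>i\<in>B-A. q i + q (\<sigma> i))" by (rule split)
    also have "(\<Sum>k\<in>R. q k) = (\<Sum>k\<in>R. p k)" using Rq by simp
    also have "(\<Sum>i\<in>B-A. q i + q (\<sigma> i)) = (\<Sum>i\<in>B-A. p i + p (\<sigma> i))"
      using z qi qs unfolding Q_def by (intro sum.cong) auto
    also have "(\<Sum>k\<in>R. p k) + (\<Sum>i\<in>B-A. p i + p (\<sigma> i)) = (\<Sum>k=1..n. p k)" by (rule split[symmetric])
    finally show ?thesis using psum by simp
  qed
  have qB: "q b * E b \<ge> g" if "b \<in> B" for b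
  proof (cases "b \<in> A")
    case True then show ?thesis using ABq[of b] pA[of b] that by auto
  next
    case False then have "b \<in> B - A" using that by auto
    then show ?thesis using z qi unfolding Q_def by auto
  qed
  have qN: "g \<ge> q t * E t" if "t \<in> {1..n} - B" for t
  proof (cases "t \<in> A")
    case True then have t: "t \<in> A - B" using that by auto
    have "q t = snd (z (\<tau> t))" using qs[OF tau1(1)[OF t]] tau1(2)[OF t] by simp
    then show ?thesis using z[OF tau1(1)[OF t]] tau1(2)[OF t] unfolding Q_def by auto
  next
    case False then show ?thesis using qo[of t] pN[of t] that by auto
  qed
  have fq: "(q, g) \<in> feasibleA n r E B"
    unfolding feasibleA_def simplexI_def using qb qsum qB qN by auto
  have key: "(\<Sum>i\<in>B-A. p i * E i + p (\<sigma> i) * E (\<sigma> i) / 2) \<le> (\<Sum>i\<in>B-A. q i * E i / 2 + q (\<sigma> i) * E (\<sigma> i))"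
    using z qi qs unfolding Q_def by (intro sum_mono) (auto simp: algebra_simps)
  have RR: "(\<Sum>k\<in>R. q k * E k) = (\<Sum>k\<in>R. p k * E k)" using Rq by simp
  have AB: "(\<Sum>k\<in>A \<inter> B. q k * E k) = (\<Sum>k\<in>A \<inter> B. p k * E k)" using ABq by simp
  have oA: "objA n E A p = (\<Sum>k\<in>R. p k * E k) - (1/2) * (\<Sum>k\<in>A \<inter> B. p k * E k)
      + (\<Sum>i\<in>B-A. p i * E i + p (\<sigma> i) * E (\<sigma> i) / 2)"
    unfolding objA_def split[of "\<lambda>k. p k * E k"] splitA[of "\<lambda>k. p k * E k"]
    by (simp add: sum.distrib sum_divide_distrib[symmetric] algebra_simps)
  have oB: "objA n E B q = (\<Sum>k\<in>R. q k * E k) - (1/2) * (\<Sum>k\<in>A \<inter> B. q k * E k)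
      + (\<Sum>i\<in>B-A. q i * E i / 2 + q (\<sigma> i) * E (\<sigma> i))"
    unfolding objA_def split[of "\<lambda>k. q k * E k"] splitB[of "\<lambda>k. q k * E k"]
    by (simp add: sum.distrib sum_divide_distrib[symmetric] algebra_simps)
  show ?thesis using fq oA oB key RR AB unfolding B_def by (intro exI[of _ q]) auto
qed
theorem lemma9:
  fixes n r :: nat and E :: "nat \<Rightarrow> real" and A :: "nat set"
  assumes "n \<ge> 2" and "0 < r" and "r < n"
    and "\<And>i j. 1 \<le> i \<Longrightarrow> i \<le> j \<Longrightarrow> j \<le> n \<Longrightarrow> E i \<ge> E j"
    and "E n > 0"
    and "A \<subseteq> {1..n}" and "card A = r"
  shows "optA n r E {1..r} \<ge> optA n r E A"
  unfolding optA_def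
proof (rule cSUP_mono)
  have fA: "finite A" using assms(6) finite_subset by blast
  define p0 where "p0 = (\<lambda>j. if j \<in> A then 1 else 0::real)"
  have "(\<Sum>k=1..n. p0 k) = real r"
  proof -
    have "(\<Sum>k=1..n. p0 k) = (\<Sum>k\<in>{1..n}. if k \<in> A then 1 else 0)" unfolding p0_def by simp
    also have "\<dots> = real (card ({1..n} \<inter> A))" by (simp add: sum.If_cases)
    also have "{1..n} \<inter> A = A" using assms(6) by auto
    finally show ?thesis using assms(7) by simp
  qed
  moreover have "\<forall>a\<in>A. 0 \<le> E a"
  proof
    fix a assume "a \<in> A"
    hence "1 \<le> a" "a \<le> n" using assms(6) by auto
    hence "E a \<ge> E n" using assms(4) by auto
    thus "0 \<le> E a" using assms(5) by linarith
  qed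
  ultimately have "(p0, 0) \<in> feasibleA n r E A"
    unfolding feasibleA_def simplexI_def p0_def using assms by auto
  thus "feasibleA n r E A \<noteq> {}" by auto
next
  have Epos: "\<And>k. k \<in> {1..n} \<Longrightarrow> E k > 0" using assms(4,5) by (meson atLeastAtMost_iff less_le_trans order.refl)
  show "bdd_above ((\<lambda>x. objA n E {1..r} (fst x)) ` feasibleA n r E {1..r})"
  proof (rule bdd_aboveI2)
    fix x assume x: "x \<in> feasibleA n r E {1..r}"
    obtain q g where xq: "x = (q, g)" by fastforce
    have qb: "\<And>k. k \<in> {1..n} \<Longrightarrow> 0 \<le> q k \<and> q k \<le> 1" using x xq unfolding feasibleA_def simplexI_def by auto
    have "(\<Sum>j=1..n. q j * E j) \<le> (\<Sum>j=1..n. E j)"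
      using qb Epos by (intro sum_mono) (simp add: mult_left_le_one_le less_imp_le)
    moreover have "(\<Sum>j\<in>{1..r}. q j * E j) \<ge> 0"
      using qb Epos assms(3) by (intro sum_nonneg) (simp add: less_imp_le)
    ultimately show "objA n E {1..r} (fst x) \<le> (\<Sum>j=1..n. E j)"
      unfolding objA_def xq by simp
  qed
next
  fix x assume x: "x \<in> feasibleA n r E A"
  obtain p g where xp: "x = (p, g)" by fastforce
  obtain q where "(q, g) \<in> feasibleA n r E {1..r}" "objA n E A p \<le> objA n E {1..r} q"
    using improve[of r n E A p g, OF assms(3,4,5,6,7)] x xp by blast
  thus "\<exists>m\<in>feasibleA n r E {1..r}. objA n E A (fst x) \<le> objA n E {1..r} (fst m)"
    using xp by force
qed
end
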